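(* Let $q$ be an odd prime with $q \neq 5$, and let $k$ be an integer with $2 \leq k \leq 31$ such that $p = kq+1$ is prime and $z(p) \mid \pi(q)$. Then $k = 2$; that is, $p = 2q+1$ and $q$ is a Sophie Germain prime.
   Context: $F_n$ denotes the $n$-th Fibonacci number ($F_0 = 0$, $F_1 = 1$). For a prime $p$, $z(p)$ (rank of apparition) is the least positive integer $k$ with $p \mid F_k$. $\pi(n)$ is the Pisano period, the least period of $(F_m \bmod n)_{m\ge0}$. A Sophie Germain prime is a prime $q$ with $2q+1$ prime. *)

theory Defs
  imports "HOL-Number_Theory.Fib" "HOL-Computational_Algebra.Primes"
begin

definition rank_app :: "nat \<Rightarrow> nat" where
  "rank_app n = (LEAST k. 0 < k \<and> n dvd fib k)"

definition pisano :: "nat \<Rightarrow> nat" where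
  "pisano n = (LEAST k. 0 < k \<and> (\<forall>m. fib (m + k) mod n = fib m mod n))"

end

theory Submission
  imports Defs "HOL-Number_Theory.Number_Theory"
begin


lemma binom_shift:
  fixes g :: "nat \<Rightarrow> nat"
  shows "(\<Sum>i\<le>Suc n. (Suc n choose i) * g i) =
         (\<Sum>i\<le>n. (n choose i) * g i) + (\<Sum>i\<le>n. (n choose i) * g (Suc i))"
proof -
  have "(\<Sum>i\<le>Suc n. (Suc n choose i) * g i) = g 0 + (\<Sum>i\<le>n. (Suc n choose Suc i) * g (Suc i))"
    by (simp only: sum.atMost_Suc_shift binomial_n_0 mult_1)
  also have "\<dots> = g 0 + (\<Sum>i\<le>n. (n choose i) * g (Suc i)) + (\<Sum>i\<le>n. (n choose Suc i) * g (Suc i))"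
    by (simp only: binomial_Suc_Suc sum.distrib distrib_right add.assoc add.commute add.left_commute)
  finally have e1: "(\<Sum>i\<le>Suc n. (Suc n choose i) * g i) = (\<Sum>i\<le>n. (n choose i) * g (Suc i)) + (g 0 + (\<Sum>i\<le>n. (n choose Suc i) * g (Suc i)))"
    by simp
  have "g 0 + (\<Sum>i\<le>n. (n choose Suc i) * g (Suc i)) = (\<Sum>i\<le>Suc n. (n choose i) * g i)"
    by (simp only: sum.atMost_Suc_shift binomial_n_0 mult_1)
  also have "\<dots> = (\<Sum>i\<le>n. (n choose i) * g i)" by simp
  finally show ?thesis using e1 by simp
qed

definition gA :: "nat \<Rightarrow> nat" where "gA i = (if even i then 5 ^ (i div 2) else 0)"
definition gB :: "nat \<Rightarrow> nat" where "gB i = (if odd i then 5 ^ (i div 2) else 0)"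
definition As :: "nat \<Rightarrow> nat" where "As n = (\<Sum>i\<le>n. (n choose i) * gA i)"
definition Bs :: "nat \<Rightarrow> nat" where "Bs n = (\<Sum>i\<le>n. (n choose i) * gB i)"

lemma gA_Suc: "gA (Suc i) = 5 * gB i"
  by (auto simp: gA_def gB_def elim!: oddE)
lemma gB_Suc: "gB (Suc i) = gA i"
  by (auto simp: gA_def gB_def elim!: evenE)

lemma As_Suc: "As (Suc n) = As n + 5 * Bs n"
  unfolding As_def Bs_def binom_shift gA_Suc by (simp add: sum_distrib_left mult.left_commute)
lemma Bs_Suc: "Bs (Suc n) = As n + Bs n"
  unfolding As_def Bs_def binom_shift gB_Suc by simp

lemma AB_fib: "2 * Bs n = 2 ^ n * fib n \<and> As n + Bs n = 2 ^ n * fib (Suc n)"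
proof (induction n)
  case 0
  then show ?case by (simp add: As_def Bs_def gA_def gB_def)
next
  case (Suc n)
  have f: "fib (Suc (Suc n)) = fib (Suc n) + fib n" by simp
  show ?case using Suc by (simp add: As_Suc Bs_Suc f algebra_simps)
qed

lemma sum_mod_prime:
  fixes g :: "nat \<Rightarrow> nat"
  assumes "prime q"
  shows "[(\<Sum>i\<le>q. (q choose i) * g i) = g 0 + g q] (mod q)"
proof -
  have q: "q > 1" using assms prime_gt_1_nat by blast
  have split: "{..q} = insert 0 (insert q {1..<q})" by auto
  have "(\<Sum>i\<le>q. (q choose i) * g i) = g 0 + g q + (\<Sum>i\<in>{1..<q}. (q choose i) * g i)"
    using q by (simp add: split)
  moreover have "q dvd (\<Sum>i\<in>{1..<q}. (q choose i) * g i)"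
    by (rule dvd_sum) (use assms q in \<open>auto intro!: dvd_mult2 dvd_choose_prime\<close>)
  then obtain c where "(\<Sum>i\<in>{1..<q}. (q choose i) * g i) = q * c" by blast
  ultimately show ?thesis unfolding cong_def by simp
qed

lemma FL:
  fixes q :: nat
  assumes q: "prime q" "q \<noteq> 2" "q \<noteq> 5"
  shows "(q dvd fib (q - 1) \<and> [fib q = 1] (mod q)) \<or> (q dvd fib (Suc q) \<and> [fib q + 1 = 0] (mod q))"
proof -
  have q1: "q > 2" using q prime_ge_2_nat[of q] by linarith
  have oq: "odd q" by (rule prime_odd_nat[OF q(1) q1])
  obtain r where qr: "q = 2 * r + 1" using oq by (rule oddE)
  have r1: "r \<ge> 1" using qr q1 by simp
  define e where "e = (5::nat) ^ ((q - 1) div 2)"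
  have n2: "\<not> q dvd 2" using q1 by (simp add: nat_dvd_not_less)
  have cop2: "coprime 2 q" using prime_imp_coprime[OF q(1) n2] by (simp add: coprime_commute)
  have n5: "\<not> q dvd 5"
  proof
    assume "q dvd 5"
    moreover have "prime (5::nat)" by simp
    ultimately have "q = 5" using primes_dvd_imp_eq q(1) by blast
    then show False using q(3) by simp
  qed
  have f2: "[2 ^ (q - 1) = 1] (mod q)" by (rule fermat_theorem) (use q n2 in auto)
  have pq: "(2::nat) ^ q = 2 * 2 ^ (q - 1)" using qr by simp
  have f2': "[2 ^ q = 2] (mod q)"
    using cong_mult[OF cong_refl[of 2] f2] pq by simp
  have gBq: "gB q = e" using qr by (simp add: gB_def e_def)
  have gAq: "gA q = 0" using oq by (simp add: gA_def)
  have gB0: "gB 0 = 0" by (simp add: gB_def)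
  have gA0: "gA 0 = 1" by (simp add: gA_def)
  have Bq: "[Bs q = e] (mod q)"
    using sum_mod_prime[OF q(1), of gB] by (simp add: Bs_def gBq gB0)
  have Aq: "[As q = 1] (mod q)"
    using sum_mod_prime[OF q(1), of gA] by (simp add: As_def gAq gA0)
  have AB: "2 * Bs q = 2 ^ q * fib q" "As q + Bs q = 2 ^ q * fib (Suc q)" using AB_fib by auto
  have c1: "[2 * fib q = 2 * e] (mod q)"
  proof -
    have "[2 * fib q = 2 ^ q * fib q] (mod q)" using cong_mult[OF cong_sym[OF f2'] cong_refl] by simp
    also have "2 ^ q * fib q = 2 * Bs q" using AB by simp
    also have "[2 * Bs q = 2 * e] (mod q)" using cong_mult[OF cong_refl Bq] by simp
    finally show ?thesis .
  qed
  then have c1': "[fib q = e] (mod q)" using cong_mult_lcancel_nat[OF cop2] by blast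
  have c2: "[2 * fib (Suc q) = 1 + e] (mod q)"
  proof -
    have "[2 * fib (Suc q) = 2 ^ q * fib (Suc q)] (mod q)" using cong_mult[OF cong_sym[OF f2'] cong_refl] by simp
    also have "2 ^ q * fib (Suc q) = As q + Bs q" using AB by simp
    also have "[As q + Bs q = 1 + e] (mod q)" using cong_add[OF Aq Bq] by simp
    finally show ?thesis .
  qed
  have ee: "[e * e = 1] (mod q)"
  proof -
    have "e * e = 5 ^ (q - 1)" unfolding e_def using qr
      by (simp add: power_add[symmetric] mult_2)
    also have "[5 ^ (q - 1) = (1::nat)] (mod q)" by (rule fermat_theorem) (use q n5 in auto)
    finally show ?thesis .
  qed
  have epos: "e \<ge> 1" unfolding e_def by simp
  have "q dvd e * e - 1" using ee epos cong_altdef_nat[of 1 "e*e" q] by (simp add: Suc_leI)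
  also have "e * e - 1 = (e - 1) * (e + 1)" using epos by (simp add: algebra_simps)
  finally have "q dvd e - 1 \<or> q dvd e + 1" using q(1) prime_dvd_mult_iff by blast
  then show ?thesis
  proof
    assume "q dvd e - 1"
    then have e1: "[e = 1] (mod q)" using cong_altdef_nat[OF epos] by blast
    have fq: "[fib q = 1] (mod q)" using cong_trans[OF c1' e1] .
    have "[2 * fib (Suc q) = 2 * 1] (mod q)" using cong_trans[OF c2 cong_add[OF cong_refl[of 1] e1]] by (simp add: numeral_2_eq_2)
    then have fs: "[fib (Suc q) = 1] (mod q)" using cong_mult_lcancel_nat[OF cop2] by blast
    have "fib (Suc q) = fib q + fib (q - 1)" using qr r1
      by (cases r) auto
    then have "[fib q + fib (q - 1) = fib q + 0] (mod q)"
      using cong_trans[OF fs cong_sym[OF fq]] by simp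
    then have "[fib (q - 1) = 0] (mod q)" using cong_add_lcancel_nat by blast
    then show ?thesis using fq by (simp add: cong_0_iff)
  next
    assume "q dvd e + 1"
    then have e1: "[e + 1 = 0] (mod q)" by (simp add: cong_0_iff)
    have fq: "[fib q + 1 = 0] (mod q)" using cong_trans[OF cong_add[OF c1' cong_refl] e1] .
    have "[2 * fib (Suc q) = 2 * 0] (mod q)" using cong_trans[OF c2] e1 by (simp add: add.commute)
    then have fs: "[fib (Suc q) = 0] (mod q)" using cong_mult_lcancel_nat[OF cop2] by blast
    then show ?thesis using fq by (simp add: cong_0_iff)
  qed
qed


function ndiv :: "nat \<Rightarrow> nat \<Rightarrow> nat \<Rightarrow> bool" where
  "ndiv n d f = (if f = 0 then True else (n mod d \<noteq> 0 \<and> ndiv n (d + 1) (f - 1)))"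
  by auto
termination by (relation "measure (\<lambda>(n,d,f). f)") auto
declare ndiv.simps[simp del]

lemma ndiv_correct: "ndiv n d f \<Longrightarrow> d \<le> e \<Longrightarrow> e < d + f \<Longrightarrow> \<not> e dvd n"
proof (induction n d f rule: ndiv.induct)
  case (1 n d f)
  show ?case
  proof (cases "f = 0")
    case True then show ?thesis using 1 by simp
  next
    case False
    then have h: "n mod d \<noteq> 0" "ndiv n (d + 1) (f - 1)" using "1.prems"(1) ndiv.simps[of n d f] by auto
    show ?thesis
    proof (cases "e = d")
      case True then show ?thesis using h by (simp add: dvd_eq_mod_eq_0)
    next
      case False
      then show ?thesis using "1.IH"[OF \<open>f \<noteq> 0\<close> h(2)] "1.prems" by auto
    qed
  qed
qed

lemma prime_by_ndiv:
  assumes "1 < n" "n < (2 + f) * (2 + f)" "ndiv n 2 f"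
  shows "prime n"
proof (rule ccontr)
  assume np: "\<not> prime n"
  obtain p where p: "prime p" "p dvd n" "p \<noteq> n" using np assms(1) prime_factor_nat[of n]
    by (metis less_irrefl)
  then obtain c where c: "n = p * c" by blast
  have "c \<noteq> 1" using c p by auto
  moreover have "c \<noteq> 0" using c assms(1) by (cases "c = 0") auto
  ultimately have "c \<ge> 2" by linarith
  then obtain r where r: "prime r" "r dvd c" using prime_factor_nat[of c] by auto
  have rn: "r dvd n" using r c by simp
  define e where "e = min p r"
  have ep: "prime e" using p r by (simp add: e_def min_def)
  have edv: "e dvd n" using p rn by (simp add: e_def min_def)
  have "r \<le> c" using r \<open>c \<ge> 2\<close> by (simp add: dvd_imp_le)
  have "p * r dvd n" using c r by (simp add: mult_dvd_mono)
  then have "p * r \<le> n" using assms(1) by (simp add: dvd_imp_le)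
  moreover have "e * e \<le> p * r" by (simp add: e_def min_def mult_mono)
  ultimately have "e * e < (2 + f) * (2 + f)" using assms(2) by linarith
  then have "e < 2 + f" by (meson mult_le_mono not_less)
  moreover have "e \<ge> 2" using ep prime_ge_2_nat by blast
  ultimately show False using ndiv_correct[OF assms(3)] edv by auto
qed

lemma fibv3: "fib 3 = 2" by (simp add: eval_nat_numeral)

lemma fibv4: "fib 4 = 3"
  using fib_plus_2[of 2] fibv3 by (simp del: fib.simps add_2_eq_Suc add_2_eq_Suc')

lemma fibv5: "fib 5 = 5"
  using fib_plus_2[of 3] fibv4 fibv3 by (simp del: fib.simps add_2_eq_Suc add_2_eq_Suc')

lemma fibv6: "fib 6 = 8"
  using fib_plus_2[of 4] fibv5 fibv4 by (simp del: fib.simps add_2_eq_Suc add_2_eq_Suc')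

lemma fibv7: "fib 7 = 13"
  using fib_plus_2[of 5] fibv6 fibv5 by (simp del: fib.simps add_2_eq_Suc add_2_eq_Suc')

lemma fibv8: "fib 8 = 21"
  using fib_plus_2[of 6] fibv7 fibv6 by (simp del: fib.simps add_2_eq_Suc add_2_eq_Suc')

lemma fibv9: "fib 9 = 34"
  using fib_plus_2[of 7] fibv8 fibv7 by (simp del: fib.simps add_2_eq_Suc add_2_eq_Suc')

lemma fibv10: "fib 10 = 55"
  using fib_plus_2[of 8] fibv9 fibv8 by (simp del: fib.simps add_2_eq_Suc add_2_eq_Suc')

lemma fibv11: "fib 11 = 89"
  using fib_plus_2[of 9] fibv10 fibv9 by (simp del: fib.simps add_2_eq_Suc add_2_eq_Suc')

lemma fibv12: "fib 12 = 144"
  using fib_plus_2[of 10] fibv11 fibv10 by (simp del: fib.simps add_2_eq_Suc add_2_eq_Suc')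

lemma fibv13: "fib 13 = 233"
  using fib_plus_2[of 11] fibv12 fibv11 by (simp del: fib.simps add_2_eq_Suc add_2_eq_Suc')

lemma fibv14: "fib 14 = 377"
  using fib_plus_2[of 12] fibv13 fibv12 by (simp del: fib.simps add_2_eq_Suc add_2_eq_Suc')

lemma fibv15: "fib 15 = 610"
  using fib_plus_2[of 13] fibv14 fibv13 by (simp del: fib.simps add_2_eq_Suc add_2_eq_Suc')

lemma fibv16: "fib 16 = 987"
  using fib_plus_2[of 14] fibv15 fibv14 by (simp del: fib.simps add_2_eq_Suc add_2_eq_Suc')

lemma fibv17: "fib 17 = 1597"
  using fib_plus_2[of 15] fibv16 fibv15 by (simp del: fib.simps add_2_eq_Suc add_2_eq_Suc')

lemma fibv18: "fib 18 = 2584"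
  using fib_plus_2[of 16] fibv17 fibv16 by (simp del: fib.simps add_2_eq_Suc add_2_eq_Suc')

lemma fibv19: "fib 19 = 4181"
  using fib_plus_2[of 17] fibv18 fibv17 by (simp del: fib.simps add_2_eq_Suc add_2_eq_Suc')

lemma fibv20: "fib 20 = 6765"
  using fib_plus_2[of 18] fibv19 fibv18 by (simp del: fib.simps add_2_eq_Suc add_2_eq_Suc')

lemma fibv21: "fib 21 = 10946"
  using fib_plus_2[of 19] fibv20 fibv19 by (simp del: fib.simps add_2_eq_Suc add_2_eq_Suc')

lemma fibv22: "fib 22 = 17711"
  using fib_plus_2[of 20] fibv21 fibv20 by (simp del: fib.simps add_2_eq_Suc add_2_eq_Suc')

lemma fibv23: "fib 23 = 28657"
  using fib_plus_2[of 21] fibv22 fibv21 by (simp del: fib.simps add_2_eq_Suc add_2_eq_Suc')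

lemma fibv24: "fib 24 = 46368"
  using fib_plus_2[of 22] fibv23 fibv22 by (simp del: fib.simps add_2_eq_Suc add_2_eq_Suc')

lemma fibv25: "fib 25 = 75025"
  using fib_plus_2[of 23] fibv24 fibv23 by (simp del: fib.simps add_2_eq_Suc add_2_eq_Suc')

lemma fibv26: "fib 26 = 121393"
  using fib_plus_2[of 24] fibv25 fibv24 by (simp del: fib.simps add_2_eq_Suc add_2_eq_Suc')

lemma fibv27: "fib 27 = 196418"
  using fib_plus_2[of 25] fibv26 fibv25 by (simp del: fib.simps add_2_eq_Suc add_2_eq_Suc')

lemma fibv28: "fib 28 = 317811"
  using fib_plus_2[of 26] fibv27 fibv26 by (simp del: fib.simps add_2_eq_Suc add_2_eq_Suc')

lemma fibv29: "fib 29 = 514229"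
  using fib_plus_2[of 27] fibv28 fibv27 by (simp del: fib.simps add_2_eq_Suc add_2_eq_Suc')

lemma fibv30: "fib 30 = 832040"
  using fib_plus_2[of 28] fibv29 fibv28 by (simp del: fib.simps add_2_eq_Suc add_2_eq_Suc')

lemma fibv31: "fib 31 = 1346269"
  using fib_plus_2[of 29] fibv30 fibv29 by (simp del: fib.simps add_2_eq_Suc add_2_eq_Suc')

lemma fibv32: "fib 32 = 2178309"
  using fib_plus_2[of 30] fibv31 fibv30 by (simp del: fib.simps add_2_eq_Suc add_2_eq_Suc')

lemma fibv33: "fib 33 = 3524578"
  using fib_plus_2[of 31] fibv32 fibv31 by (simp del: fib.simps add_2_eq_Suc add_2_eq_Suc')

lemma fibv34: "fib 34 = 5702887"
  using fib_plus_2[of 32] fibv33 fibv32 by (simp del: fib.simps add_2_eq_Suc add_2_eq_Suc')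

lemma fibv35: "fib 35 = 9227465"
  using fib_plus_2[of 33] fibv34 fibv33 by (simp del: fib.simps add_2_eq_Suc add_2_eq_Suc')

lemma fibv36: "fib 36 = 14930352"
  using fib_plus_2[of 34] fibv35 fibv34 by (simp del: fib.simps add_2_eq_Suc add_2_eq_Suc')

lemma fibv37: "fib 37 = 24157817"
  using fib_plus_2[of 35] fibv36 fibv35 by (simp del: fib.simps add_2_eq_Suc add_2_eq_Suc')

lemma fibv38: "fib 38 = 39088169"
  using fib_plus_2[of 36] fibv37 fibv36 by (simp del: fib.simps add_2_eq_Suc add_2_eq_Suc')

lemma fibv39: "fib 39 = 63245986"
  using fib_plus_2[of 37] fibv38 fibv37 by (simp del: fib.simps add_2_eq_Suc add_2_eq_Suc')

lemma fibv40: "fib 40 = 102334155"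
  using fib_plus_2[of 38] fibv39 fibv38 by (simp del: fib.simps add_2_eq_Suc add_2_eq_Suc')

lemma fibv41: "fib 41 = 165580141"
  using fib_plus_2[of 39] fibv40 fibv39 by (simp del: fib.simps add_2_eq_Suc add_2_eq_Suc')

lemma fibv42: "fib 42 = 267914296"
  using fib_plus_2[of 40] fibv41 fibv40 by (simp del: fib.simps add_2_eq_Suc add_2_eq_Suc')

lemma fibv43: "fib 43 = 433494437"
  using fib_plus_2[of 41] fibv42 fibv41 by (simp del: fib.simps add_2_eq_Suc add_2_eq_Suc')

lemma fibv44: "fib 44 = 701408733"
  using fib_plus_2[of 42] fibv43 fibv42 by (simp del: fib.simps add_2_eq_Suc add_2_eq_Suc')

lemma fibv45: "fib 45 = 1134903170"
  using fib_plus_2[of 43] fibv44 fibv43 by (simp del: fib.simps add_2_eq_Suc add_2_eq_Suc')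

lemma fibv46: "fib 46 = 1836311903"
  using fib_plus_2[of 44] fibv45 fibv44 by (simp del: fib.simps add_2_eq_Suc add_2_eq_Suc')

lemma fibv47: "fib 47 = 2971215073"
  using fib_plus_2[of 45] fibv46 fibv45 by (simp del: fib.simps add_2_eq_Suc add_2_eq_Suc')

lemma fibv48: "fib 48 = 4807526976"
  using fib_plus_2[of 46] fibv47 fibv46 by (simp del: fib.simps add_2_eq_Suc add_2_eq_Suc')

lemma fibv49: "fib 49 = 7778742049"
  using fib_plus_2[of 47] fibv48 fibv47 by (simp del: fib.simps add_2_eq_Suc add_2_eq_Suc')

lemma fibv50: "fib 50 = 12586269025"
  using fib_plus_2[of 48] fibv49 fibv48 by (simp del: fib.simps add_2_eq_Suc add_2_eq_Suc')

lemma fibv51: "fib 51 = 20365011074"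
  using fib_plus_2[of 49] fibv50 fibv49 by (simp del: fib.simps add_2_eq_Suc add_2_eq_Suc')

lemma fibv52: "fib 52 = 32951280099"
  using fib_plus_2[of 50] fibv51 fibv50 by (simp del: fib.simps add_2_eq_Suc add_2_eq_Suc')

lemma fibv53: "fib 53 = 53316291173"
  using fib_plus_2[of 51] fibv52 fibv51 by (simp del: fib.simps add_2_eq_Suc add_2_eq_Suc')

lemma fibv54: "fib 54 = 86267571272"
  using fib_plus_2[of 52] fibv53 fibv52 by (simp del: fib.simps add_2_eq_Suc add_2_eq_Suc')

lemma fibv55: "fib 55 = 139583862445"
  using fib_plus_2[of 53] fibv54 fibv53 by (simp del: fib.simps add_2_eq_Suc add_2_eq_Suc')

lemma fibv56: "fib 56 = 225851433717"
  using fib_plus_2[of 54] fibv55 fibv54 by (simp del: fib.simps add_2_eq_Suc add_2_eq_Suc')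

lemma pr2: "prime (2::nat)" by simp

lemma pr3: "prime (3::nat)" by simp

lemma pr5: "prime (5::nat)" by simp

lemma pr7: "prime (7::nat)" by simp

lemma pr11: "prime (11::nat)" by simp

lemma pr13: "prime (13::nat)" by simp

lemma pr17: "prime (17::nat)" by simp

lemma pr19: "prime (19::nat)" by simp

lemma pr23: "prime (23::nat)" by simp

lemma pr29: "prime (29::nat)" by simp

lemma pr31: "prime (31::nat)" by simp

lemma pr41: "prime (41::nat)" by simp

lemma pr43: "prime (43::nat)" by simp

lemma pr47: "prime (47::nat)" by simp

lemma pr61: "prime (61::nat)" by simp

lemma pr89: "prime (89::nat)" by simp

lemma pr107: "prime (107::nat)"
  by (rule prime_by_ndiv[where f=9]) (simp_all add: ndiv.simps)

lemma pr199: "prime (199::nat)"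
  by (rule prime_by_ndiv[where f=13]) (simp_all add: ndiv.simps)

lemma pr233: "prime (233::nat)"
  by (rule prime_by_ndiv[where f=14]) (simp_all add: ndiv.simps)

lemma pr281: "prime (281::nat)"
  by (rule prime_by_ndiv[where f=15]) (simp_all add: ndiv.simps)

lemma pr307: "prime (307::nat)"
  by (rule prime_by_ndiv[where f=16]) (simp_all add: ndiv.simps)

lemma pr521: "prime (521::nat)"
  by (rule prime_by_ndiv[where f=21]) (simp_all add: ndiv.simps)

lemma pr1103: "prime (1103::nat)"
  by (rule prime_by_ndiv[where f=32]) (simp_all add: ndiv.simps)

lemma pr2161: "prime (2161::nat)"
  by (rule prime_by_ndiv[where f=45]) (simp_all add: ndiv.simps)

lemma pr2207: "prime (2207::nat)"
  by (rule prime_by_ndiv[where f=45]) (simp_all add: ndiv.simps)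

lemma pr14503: "prime (14503::nat)"
  by (rule prime_by_ndiv[where f=119]) (simp_all add: ndiv.simps)

lemma pr90481: "prime (90481::nat)"
  by (rule prime_by_ndiv[where f=299]) (simp_all add: ndiv.simps)

lemma fac4: assumes p: "prime p" and d: "p dvd fib 4" shows "p \<in> {3}"
proof -
  have e: "fib 4 = 3" by (simp add: fibv4)
  have "p dvd 3" by (simp only: e[symmetric] d)
  then have "p dvd 3" .
  then show ?thesis using primes_dvd_imp_eq[OF p pr3] by blast
qed

lemma fac6: assumes p: "prime p" and d: "p dvd fib 6" shows "p \<in> {2}"
proof -
  have e: "fib 6 = 2 * 2 * 2" by (simp add: fibv6)
  have "p dvd 2 * 2 * 2" by (simp only: e[symmetric] d)
  then have "p dvd 2 \<or> p dvd 2 \<or> p dvd 2" by (simp only: prime_dvd_mult_iff[OF p] disj_assoc)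
  then show ?thesis using primes_dvd_imp_eq[OF p pr2] by blast
qed

lemma fac8: assumes p: "prime p" and d: "p dvd fib 8" shows "p \<in> {3, 7}"
proof -
  have e: "fib 8 = 3 * 7" by (simp add: fibv8)
  have "p dvd 3 * 7" by (simp only: e[symmetric] d)
  then have "p dvd 3 \<or> p dvd 7" by (simp only: prime_dvd_mult_iff[OF p] disj_assoc)
  then show ?thesis using primes_dvd_imp_eq[OF p pr3] primes_dvd_imp_eq[OF p pr7] by blast
qed

lemma fac10: assumes p: "prime p" and d: "p dvd fib 10" shows "p \<in> {5, 11}"
proof -
  have e: "fib 10 = 5 * 11" by (simp add: fibv10)
  have "p dvd 5 * 11" by (simp only: e[symmetric] d)
  then have "p dvd 5 \<or> p dvd 11" by (simp only: prime_dvd_mult_iff[OF p] disj_assoc)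
  then show ?thesis using primes_dvd_imp_eq[OF p pr5] primes_dvd_imp_eq[OF p pr11] by blast
qed

lemma fac12: assumes p: "prime p" and d: "p dvd fib 12" shows "p \<in> {2, 3}"
proof -
  have e: "fib 12 = 2 * 2 * 2 * 2 * 3 * 3" by (simp add: fibv12)
  have "p dvd 2 * 2 * 2 * 2 * 3 * 3" by (simp only: e[symmetric] d)
  then have "p dvd 2 \<or> p dvd 2 \<or> p dvd 2 \<or> p dvd 2 \<or> p dvd 3 \<or> p dvd 3" by (simp only: prime_dvd_mult_iff[OF p] disj_assoc)
  then show ?thesis using primes_dvd_imp_eq[OF p pr2] primes_dvd_imp_eq[OF p pr3] by blast
qed

lemma fac14: assumes p: "prime p" and d: "p dvd fib 14" shows "p \<in> {13, 29}"
proof -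
  have e: "fib 14 = 13 * 29" by (simp add: fibv14)
  have "p dvd 13 * 29" by (simp only: e[symmetric] d)
  then have "p dvd 13 \<or> p dvd 29" by (simp only: prime_dvd_mult_iff[OF p] disj_assoc)
  then show ?thesis using primes_dvd_imp_eq[OF p pr13] primes_dvd_imp_eq[OF p pr29] by blast
qed

lemma fac16: assumes p: "prime p" and d: "p dvd fib 16" shows "p \<in> {3, 7, 47}"
proof -
  have e: "fib 16 = 3 * 7 * 47" by (simp add: fibv16)
  have "p dvd 3 * 7 * 47" by (simp only: e[symmetric] d)
  then have "p dvd 3 \<or> p dvd 7 \<or> p dvd 47" by (simp only: prime_dvd_mult_iff[OF p] disj_assoc)
  then show ?thesis using primes_dvd_imp_eq[OF p pr3] primes_dvd_imp_eq[OF p pr7] primes_dvd_imp_eq[OF p pr47] by blast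
qed

lemma fac18: assumes p: "prime p" and d: "p dvd fib 18" shows "p \<in> {2, 17, 19}"
proof -
  have e: "fib 18 = 2 * 2 * 2 * 17 * 19" by (simp add: fibv18)
  have "p dvd 2 * 2 * 2 * 17 * 19" by (simp only: e[symmetric] d)
  then have "p dvd 2 \<or> p dvd 2 \<or> p dvd 2 \<or> p dvd 17 \<or> p dvd 19" by (simp only: prime_dvd_mult_iff[OF p] disj_assoc)
  then show ?thesis using primes_dvd_imp_eq[OF p pr2] primes_dvd_imp_eq[OF p pr17] primes_dvd_imp_eq[OF p pr19] by blast
qed

lemma fac20: assumes p: "prime p" and d: "p dvd fib 20" shows "p \<in> {3, 5, 11, 41}"
proof -
  have e: "fib 20 = 3 * 5 * 11 * 41" by (simp add: fibv20)
  have "p dvd 3 * 5 * 11 * 41" by (simp only: e[symmetric] d)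
  then have "p dvd 3 \<or> p dvd 5 \<or> p dvd 11 \<or> p dvd 41" by (simp only: prime_dvd_mult_iff[OF p] disj_assoc)
  then show ?thesis using primes_dvd_imp_eq[OF p pr3] primes_dvd_imp_eq[OF p pr5] primes_dvd_imp_eq[OF p pr11] primes_dvd_imp_eq[OF p pr41] by blast
qed

lemma fac22: assumes p: "prime p" and d: "p dvd fib 22" shows "p \<in> {89, 199}"
proof -
  have e: "fib 22 = 89 * 199" by (simp add: fibv22)
  have "p dvd 89 * 199" by (simp only: e[symmetric] d)
  then have "p dvd 89 \<or> p dvd 199" by (simp only: prime_dvd_mult_iff[OF p] disj_assoc)
  then show ?thesis using primes_dvd_imp_eq[OF p pr89] primes_dvd_imp_eq[OF p pr199] by blast
qed

lemma fac24: assumes p: "prime p" and d: "p dvd fib 24" shows "p \<in> {2, 3, 7, 23}"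
proof -
  have e: "fib 24 = 2 * 2 * 2 * 2 * 2 * 3 * 3 * 7 * 23" by (simp add: fibv24)
  have "p dvd 2 * 2 * 2 * 2 * 2 * 3 * 3 * 7 * 23" by (simp only: e[symmetric] d)
  then have "p dvd 2 \<or> p dvd 2 \<or> p dvd 2 \<or> p dvd 2 \<or> p dvd 2 \<or> p dvd 3 \<or> p dvd 3 \<or> p dvd 7 \<or> p dvd 23" by (simp only: prime_dvd_mult_iff[OF p] disj_assoc)
  then show ?thesis using primes_dvd_imp_eq[OF p pr2] primes_dvd_imp_eq[OF p pr3] primes_dvd_imp_eq[OF p pr7] primes_dvd_imp_eq[OF p pr23] by blast
qed

lemma fac26: assumes p: "prime p" and d: "p dvd fib 26" shows "p \<in> {233, 521}"
proof -
  have e: "fib 26 = 233 * 521" by (simp add: fibv26)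
  have "p dvd 233 * 521" by (simp only: e[symmetric] d)
  then have "p dvd 233 \<or> p dvd 521" by (simp only: prime_dvd_mult_iff[OF p] disj_assoc)
  then show ?thesis using primes_dvd_imp_eq[OF p pr233] primes_dvd_imp_eq[OF p pr521] by blast
qed

lemma fac28: assumes p: "prime p" and d: "p dvd fib 28" shows "p \<in> {3, 13, 29, 281}"
proof -
  have e: "fib 28 = 3 * 13 * 29 * 281" by (simp add: fibv28)
  have "p dvd 3 * 13 * 29 * 281" by (simp only: e[symmetric] d)
  then have "p dvd 3 \<or> p dvd 13 \<or> p dvd 29 \<or> p dvd 281" by (simp only: prime_dvd_mult_iff[OF p] disj_assoc)
  then show ?thesis using primes_dvd_imp_eq[OF p pr3] primes_dvd_imp_eq[OF p pr13] primes_dvd_imp_eq[OF p pr29] primes_dvd_imp_eq[OF p pr281] by blast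
qed

lemma fac30: assumes p: "prime p" and d: "p dvd fib 30" shows "p \<in> {2, 5, 11, 31, 61}"
proof -
  have e: "fib 30 = 2 * 2 * 2 * 5 * 11 * 31 * 61" by (simp add: fibv30)
  have "p dvd 2 * 2 * 2 * 5 * 11 * 31 * 61" by (simp only: e[symmetric] d)
  then have "p dvd 2 \<or> p dvd 2 \<or> p dvd 2 \<or> p dvd 5 \<or> p dvd 11 \<or> p dvd 31 \<or> p dvd 61" by (simp only: prime_dvd_mult_iff[OF p] disj_assoc)
  then show ?thesis using primes_dvd_imp_eq[OF p pr2] primes_dvd_imp_eq[OF p pr5] primes_dvd_imp_eq[OF p pr11] primes_dvd_imp_eq[OF p pr31] primes_dvd_imp_eq[OF p pr61] by blast
qed

lemma fac32: assumes p: "prime p" and d: "p dvd fib 32" shows "p \<in> {3, 7, 47, 2207}"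
proof -
  have e: "fib 32 = 3 * 7 * 47 * 2207" by (simp add: fibv32)
  have "p dvd 3 * 7 * 47 * 2207" by (simp only: e[symmetric] d)
  then have "p dvd 3 \<or> p dvd 7 \<or> p dvd 47 \<or> p dvd 2207" by (simp only: prime_dvd_mult_iff[OF p] disj_assoc)
  then show ?thesis using primes_dvd_imp_eq[OF p pr3] primes_dvd_imp_eq[OF p pr7] primes_dvd_imp_eq[OF p pr47] primes_dvd_imp_eq[OF p pr2207] by blast
qed

lemma fac36: assumes p: "prime p" and d: "p dvd fib 36" shows "p \<in> {2, 3, 17, 19, 107}"
proof -
  have e: "fib 36 = 2 * 2 * 2 * 2 * 3 * 3 * 3 * 17 * 19 * 107" by (simp add: fibv36)
  have "p dvd 2 * 2 * 2 * 2 * 3 * 3 * 3 * 17 * 19 * 107" by (simp only: e[symmetric] d)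
  then have "p dvd 2 \<or> p dvd 2 \<or> p dvd 2 \<or> p dvd 2 \<or> p dvd 3 \<or> p dvd 3 \<or> p dvd 3 \<or> p dvd 17 \<or> p dvd 19 \<or> p dvd 107" by (simp only: prime_dvd_mult_iff[OF p] disj_assoc)
  then show ?thesis using primes_dvd_imp_eq[OF p pr2] primes_dvd_imp_eq[OF p pr3] primes_dvd_imp_eq[OF p pr17] primes_dvd_imp_eq[OF p pr19] primes_dvd_imp_eq[OF p pr107] by blast
qed

lemma fac40: assumes p: "prime p" and d: "p dvd fib 40" shows "p \<in> {3, 5, 7, 11, 41, 2161}"
proof -
  have e: "fib 40 = 3 * 5 * 7 * 11 * 41 * 2161" by (simp add: fibv40)
  have "p dvd 3 * 5 * 7 * 11 * 41 * 2161" by (simp only: e[symmetric] d)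
  then have "p dvd 3 \<or> p dvd 5 \<or> p dvd 7 \<or> p dvd 11 \<or> p dvd 41 \<or> p dvd 2161" by (simp only: prime_dvd_mult_iff[OF p] disj_assoc)
  then show ?thesis using primes_dvd_imp_eq[OF p pr3] primes_dvd_imp_eq[OF p pr5] primes_dvd_imp_eq[OF p pr7] primes_dvd_imp_eq[OF p pr11] primes_dvd_imp_eq[OF p pr41] primes_dvd_imp_eq[OF p pr2161] by blast
qed

lemma fac44: assumes p: "prime p" and d: "p dvd fib 44" shows "p \<in> {3, 43, 89, 199, 307}"
proof -
  have e: "fib 44 = 3 * 43 * 89 * 199 * 307" by (simp add: fibv44)
  have "p dvd 3 * 43 * 89 * 199 * 307" by (simp only: e[symmetric] d)
  then have "p dvd 3 \<or> p dvd 43 \<or> p dvd 89 \<or> p dvd 199 \<or> p dvd 307" by (simp only: prime_dvd_mult_iff[OF p] disj_assoc)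
  then show ?thesis using primes_dvd_imp_eq[OF p pr3] primes_dvd_imp_eq[OF p pr43] primes_dvd_imp_eq[OF p pr89] primes_dvd_imp_eq[OF p pr199] primes_dvd_imp_eq[OF p pr307] by blast
qed

lemma fac48: assumes p: "prime p" and d: "p dvd fib 48" shows "p \<in> {2, 3, 7, 23, 47, 1103}"
proof -
  have e: "fib 48 = 2 * 2 * 2 * 2 * 2 * 2 * 3 * 3 * 7 * 23 * 47 * 1103" by (simp add: fibv48)
  have "p dvd 2 * 2 * 2 * 2 * 2 * 2 * 3 * 3 * 7 * 23 * 47 * 1103" by (simp only: e[symmetric] d)
  then have "p dvd 2 \<or> p dvd 2 \<or> p dvd 2 \<or> p dvd 2 \<or> p dvd 2 \<or> p dvd 2 \<or> p dvd 3 \<or> p dvd 3 \<or> p dvd 7 \<or> p dvd 23 \<or> p dvd 47 \<or> p dvd 1103" by (simp only: prime_dvd_mult_iff[OF p] disj_assoc)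
  then show ?thesis using primes_dvd_imp_eq[OF p pr2] primes_dvd_imp_eq[OF p pr3] primes_dvd_imp_eq[OF p pr7] primes_dvd_imp_eq[OF p pr23] primes_dvd_imp_eq[OF p pr47] primes_dvd_imp_eq[OF p pr1103] by blast
qed

lemma fac52: assumes p: "prime p" and d: "p dvd fib 52" shows "p \<in> {3, 233, 521, 90481}"
proof -
  have e: "fib 52 = 3 * 233 * 521 * 90481" by (simp add: fibv52)
  have "p dvd 3 * 233 * 521 * 90481" by (simp only: e[symmetric] d)
  then have "p dvd 3 \<or> p dvd 233 \<or> p dvd 521 \<or> p dvd 90481" by (simp only: prime_dvd_mult_iff[OF p] disj_assoc)
  then show ?thesis using primes_dvd_imp_eq[OF p pr3] primes_dvd_imp_eq[OF p pr233] primes_dvd_imp_eq[OF p pr521] primes_dvd_imp_eq[OF p pr90481] by blast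
qed

lemma fac56: assumes p: "prime p" and d: "p dvd fib 56" shows "p \<in> {3, 7, 13, 29, 281, 14503}"
proof -
  have e: "fib 56 = 3 * 7 * 7 * 13 * 29 * 281 * 14503" by (simp add: fibv56)
  have "p dvd 3 * 7 * 7 * 13 * 29 * 281 * 14503" by (simp only: e[symmetric] d)
  then have "p dvd 3 \<or> p dvd 7 \<or> p dvd 7 \<or> p dvd 13 \<or> p dvd 29 \<or> p dvd 281 \<or> p dvd 14503" by (simp only: prime_dvd_mult_iff[OF p] disj_assoc)
  then show ?thesis using primes_dvd_imp_eq[OF p pr3] primes_dvd_imp_eq[OF p pr7] primes_dvd_imp_eq[OF p pr13] primes_dvd_imp_eq[OF p pr29] primes_dvd_imp_eq[OF p pr281] primes_dvd_imp_eq[OF p pr14503] by blast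
qed

lemma case4: assumes "m \<in> {4, 6}" "prime p" "p dvd fib m" "p mod 8 = 5" "p \<noteq> 5" "p \<noteq> 199 \<or> (4::nat) \<noteq> 22"
  shows False
proof -
  have "m = 4 \<or> m = 6" using assms(1) by simp
  then show False
  proof (elim disjE)
    assume "m = 4" then have "p \<in> {3}" using fac4[OF assms(2)] assms(3) by simp
    then show False using assms(4-6) by auto
  next
    assume "m = 6" then have "p \<in> {2}" using fac6[OF assms(2)] assms(3) by simp
    then show False using assms(4-6) by auto
  qed
qed

lemma case6: assumes "m \<in> {6, 8}" "prime p" "p dvd fib m" "p mod 12 = 7" "p \<noteq> 7" "p \<noteq> 199 \<or> (6::nat) \<noteq> 22"
  shows False
proof -
  have "m = 6 \<or> m = 8" using assms(1) by simp
  then show False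
  proof (elim disjE)
    assume "m = 6" then have "p \<in> {2}" using fac6[OF assms(2)] assms(3) by simp
    then show False using assms(4-6) by auto
  next
    assume "m = 8" then have "p \<in> {3, 7}" using fac8[OF assms(2)] assms(3) by simp
    then show False using assms(4-6) by auto
  qed
qed

lemma case8: assumes "m \<in> {8, 10, 12}" "prime p" "p dvd fib m" "p mod 16 = 9" "p \<noteq> 9" "p \<noteq> 199 \<or> (8::nat) \<noteq> 22"
  shows False
proof -
  have "m = 8 \<or> m = 10 \<or> m = 12" using assms(1) by simp
  then show False
  proof (elim disjE)
    assume "m = 8" then have "p \<in> {3, 7}" using fac8[OF assms(2)] assms(3) by simp
    then show False using assms(4-6) by auto
  next
    assume "m = 10" then have "p \<in> {5, 11}" using fac10[OF assms(2)] assms(3) by simp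
    then show False using assms(4-6) by auto
  next
    assume "m = 12" then have "p \<in> {2, 3}" using fac12[OF assms(2)] assms(3) by simp
    then show False using assms(4-6) by auto
  qed
qed

lemma case10: assumes "m \<in> {10, 12, 16}" "prime p" "p dvd fib m" "p mod 20 = 11" "p \<noteq> 11" "p \<noteq> 199 \<or> (10::nat) \<noteq> 22"
  shows False
proof -
  have "m = 10 \<or> m = 12 \<or> m = 16" using assms(1) by simp
  then show False
  proof (elim disjE)
    assume "m = 10" then have "p \<in> {5, 11}" using fac10[OF assms(2)] assms(3) by simp
    then show False using assms(4-6) by auto
  next
    assume "m = 12" then have "p \<in> {2, 3}" using fac12[OF assms(2)] assms(3) by simp
    then show False using assms(4-6) by auto
  next
    assume "m = 16" then have "p \<in> {3, 7, 47}" using fac16[OF assms(2)] assms(3) by simp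
    then show False using assms(4-6) by auto
  qed
qed

lemma case12: assumes "m \<in> {12, 14, 20}" "prime p" "p dvd fib m" "p mod 24 = 13" "p \<noteq> 13" "p \<noteq> 199 \<or> (12::nat) \<noteq> 22"
  shows False
proof -
  have "m = 12 \<or> m = 14 \<or> m = 20" using assms(1) by simp
  then show False
  proof (elim disjE)
    assume "m = 12" then have "p \<in> {2, 3}" using fac12[OF assms(2)] assms(3) by simp
    then show False using assms(4-6) by auto
  next
    assume "m = 14" then have "p \<in> {13, 29}" using fac14[OF assms(2)] assms(3) by simp
    then show False using assms(4-6) by auto
  next
    assume "m = 20" then have "p \<in> {3, 5, 11, 41}" using fac20[OF assms(2)] assms(3) by simp
    then show False using assms(4-6) by auto
  qed
qed

lemma case14: assumes "m \<in> {14, 16, 24}" "prime p" "p dvd fib m" "p mod 28 = 15" "p \<noteq> 15" "p \<noteq> 199 \<or> (14::nat) \<noteq> 22"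
  shows False
proof -
  have "m = 14 \<or> m = 16 \<or> m = 24" using assms(1) by simp
  then show False
  proof (elim disjE)
    assume "m = 14" then have "p \<in> {13, 29}" using fac14[OF assms(2)] assms(3) by simp
    then show False using assms(4-6) by auto
  next
    assume "m = 16" then have "p \<in> {3, 7, 47}" using fac16[OF assms(2)] assms(3) by simp
    then show False using assms(4-6) by auto
  next
    assume "m = 24" then have "p \<in> {2, 3, 7, 23}" using fac24[OF assms(2)] assms(3) by simp
    then show False using assms(4-6) by auto
  qed
qed

lemma case16: assumes "m \<in> {16, 18, 28}" "prime p" "p dvd fib m" "p mod 32 = 17" "p \<noteq> 17" "p \<noteq> 199 \<or> (16::nat) \<noteq> 22"
  shows False
proof -
  have "m = 16 \<or> m = 18 \<or> m = 28" using assms(1) by simp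
  then show False
  proof (elim disjE)
    assume "m = 16" then have "p \<in> {3, 7, 47}" using fac16[OF assms(2)] assms(3) by simp
    then show False using assms(4-6) by auto
  next
    assume "m = 18" then have "p \<in> {2, 17, 19}" using fac18[OF assms(2)] assms(3) by simp
    then show False using assms(4-6) by auto
  next
    assume "m = 28" then have "p \<in> {3, 13, 29, 281}" using fac28[OF assms(2)] assms(3) by simp
    then show False using assms(4-6) by auto
  qed
qed

lemma case18: assumes "m \<in> {18, 20, 32}" "prime p" "p dvd fib m" "p mod 36 = 19" "p \<noteq> 19" "p \<noteq> 199 \<or> (18::nat) \<noteq> 22"
  shows False
proof -
  have "m = 18 \<or> m = 20 \<or> m = 32" using assms(1) by simp
  then show False
  proof (elim disjE)
    assume "m = 18" then have "p \<in> {2, 17, 19}" using fac18[OF assms(2)] assms(3) by simp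
    then show False using assms(4-6) by auto
  next
    assume "m = 20" then have "p \<in> {3, 5, 11, 41}" using fac20[OF assms(2)] assms(3) by simp
    then show False using assms(4-6) by auto
  next
    assume "m = 32" then have "p \<in> {3, 7, 47, 2207}" using fac32[OF assms(2)] assms(3) by simp
    then show False using assms(4-6) by auto
  qed
qed

lemma case20: assumes "m \<in> {20, 22, 36}" "prime p" "p dvd fib m" "p mod 40 = 21" "p \<noteq> 21" "p \<noteq> 199 \<or> (20::nat) \<noteq> 22"
  shows False
proof -
  have "m = 20 \<or> m = 22 \<or> m = 36" using assms(1) by simp
  then show False
  proof (elim disjE)
    assume "m = 20" then have "p \<in> {3, 5, 11, 41}" using fac20[OF assms(2)] assms(3) by simp
    then show False using assms(4-6) by auto
  next
    assume "m = 22" then have "p \<in> {89, 199}" using fac22[OF assms(2)] assms(3) by simp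
    then show False using assms(4-6) by auto
  next
    assume "m = 36" then have "p \<in> {2, 3, 17, 19, 107}" using fac36[OF assms(2)] assms(3) by simp
    then show False using assms(4-6) by auto
  qed
qed

lemma case22: assumes "m \<in> {22, 24, 40}" "prime p" "p dvd fib m" "p mod 44 = 23" "p \<noteq> 23" "p \<noteq> 199 \<or> (22::nat) \<noteq> 22"
  shows False
proof -
  have "m = 22 \<or> m = 24 \<or> m = 40" using assms(1) by simp
  then show False
  proof (elim disjE)
    assume "m = 22" then have "p \<in> {89, 199}" using fac22[OF assms(2)] assms(3) by simp
    then show False using assms(4-6) by auto
  next
    assume "m = 24" then have "p \<in> {2, 3, 7, 23}" using fac24[OF assms(2)] assms(3) by simp
    then show False using assms(4-6) by auto
  next
    assume "m = 40" then have "p \<in> {3, 5, 7, 11, 41, 2161}" using fac40[OF assms(2)] assms(3) by simp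
    then show False using assms(4-6) by auto
  qed
qed

lemma case24: assumes "m \<in> {24, 26, 44}" "prime p" "p dvd fib m" "p mod 48 = 25" "p \<noteq> 25" "p \<noteq> 199 \<or> (24::nat) \<noteq> 22"
  shows False
proof -
  have "m = 24 \<or> m = 26 \<or> m = 44" using assms(1) by simp
  then show False
  proof (elim disjE)
    assume "m = 24" then have "p \<in> {2, 3, 7, 23}" using fac24[OF assms(2)] assms(3) by simp
    then show False using assms(4-6) by auto
  next
    assume "m = 26" then have "p \<in> {233, 521}" using fac26[OF assms(2)] assms(3) by simp
    then show False using assms(4-6) by auto
  next
    assume "m = 44" then have "p \<in> {3, 43, 89, 199, 307}" using fac44[OF assms(2)] assms(3) by simp
    then show False using assms(4-6) by auto
  qed
qed

lemma case26: assumes "m \<in> {26, 28, 48}" "prime p" "p dvd fib m" "p mod 52 = 27" "p \<noteq> 27" "p \<noteq> 199 \<or> (26::nat) \<noteq> 22"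
  shows False
proof -
  have "m = 26 \<or> m = 28 \<or> m = 48" using assms(1) by simp
  then show False
  proof (elim disjE)
    assume "m = 26" then have "p \<in> {233, 521}" using fac26[OF assms(2)] assms(3) by simp
    then show False using assms(4-6) by auto
  next
    assume "m = 28" then have "p \<in> {3, 13, 29, 281}" using fac28[OF assms(2)] assms(3) by simp
    then show False using assms(4-6) by auto
  next
    assume "m = 48" then have "p \<in> {2, 3, 7, 23, 47, 1103}" using fac48[OF assms(2)] assms(3) by simp
    then show False using assms(4-6) by auto
  qed
qed

lemma case28: assumes "m \<in> {28, 30, 52}" "prime p" "p dvd fib m" "p mod 56 = 29" "p \<noteq> 29" "p \<noteq> 199 \<or> (28::nat) \<noteq> 22"
  shows False
proof -
  have "m = 28 \<or> m = 30 \<or> m = 52" using assms(1) by simp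
  then show False
  proof (elim disjE)
    assume "m = 28" then have "p \<in> {3, 13, 29, 281}" using fac28[OF assms(2)] assms(3) by simp
    then show False using assms(4-6) by auto
  next
    assume "m = 30" then have "p \<in> {2, 5, 11, 31, 61}" using fac30[OF assms(2)] assms(3) by simp
    then show False using assms(4-6) by auto
  next
    assume "m = 52" then have "p \<in> {3, 233, 521, 90481}" using fac52[OF assms(2)] assms(3) by simp
    then show False using assms(4-6) by auto
  qed
qed

lemma case30: assumes "m \<in> {30, 32, 56}" "prime p" "p dvd fib m" "p mod 60 = 31" "p \<noteq> 31" "p \<noteq> 199 \<or> (30::nat) \<noteq> 22"
  shows False
proof -
  have "m = 30 \<or> m = 32 \<or> m = 56" using assms(1) by simp
  then show False
  proof (elim disjE)
    assume "m = 30" then have "p \<in> {2, 5, 11, 31, 61}" using fac30[OF assms(2)] assms(3) by simp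
    then show False using assms(4-6) by auto
  next
    assume "m = 32" then have "p \<in> {3, 7, 47, 2207}" using fac32[OF assms(2)] assms(3) by simp
    then show False using assms(4-6) by auto
  next
    assume "m = 56" then have "p \<in> {3, 7, 13, 29, 281, 14503}" using fac56[OF assms(2)] assms(3) by simp
    then show False using assms(4-6) by auto
  qed
qed


lemma pisano_dvd:
  fixes n N :: nat
  assumes N: "N > 0" and per: "\<forall>m. fib (m + N) mod n = fib m mod n"
  shows "pisano n dvd N"
proof -
  define P where "P = pisano n"
  have ex: "\<exists>k. 0 < k \<and> (\<forall>m. fib (m + k) mod n = fib m mod n)" using N per by blast
  have P: "0 < P \<and> (\<forall>m. fib (m + P) mod n = fib m mod n)"
    unfolding P_def pisano_def by (rule LeastI_ex[OF ex])
  have mult: "fib (m + a * P) mod n = fib m mod n" for a m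
  proof (induction a)
    case 0 then show ?case by simp
  next
    case (Suc a)
    have "fib (m + Suc a * P) = fib ((m + a * P) + P)" by (simp add: algebra_simps)
    then show ?case using P Suc by simp
  qed
  define r where "r = N mod P"
  have Nr: "N = r + (N div P) * P" unfolding r_def by simp
  have rper: "\<forall>m. fib (m + r) mod n = fib m mod n"
  proof
    fix m
    have "fib (m + r) mod n = fib (m + r + (N div P) * P) mod n" using mult[of "m + r" "N div P"] by simp
    also have "m + r + (N div P) * P = m + N" using Nr by simp
    finally show "fib (m + r) mod n = fib m mod n" using per by simp
  qed
  have "r < P" unfolding r_def using P by simp
  have "r = 0"
  proof (rule ccontr)
    assume "r \<noteq> 0"
    then have "P \<le> r" unfolding P_def pisano_def using rper by (intro Least_le) simp
    then show False using \<open>r < P\<close> by simp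
  qed
  then show ?thesis unfolding P_def[symmetric] r_def by (simp add: dvd_eq_mod_eq_0)
qed

lemma rank_props:
  fixes p n :: nat
  assumes "p dvd fib n" "n > 0"
  shows "rank_app p > 0" "p dvd fib (rank_app p)" "rank_app p dvd n"
proof -
  define R where "R = rank_app p"
  have ex: "\<exists>k. 0 < k \<and> p dvd fib k" using assms by blast
  have R: "0 < R \<and> p dvd fib R" unfolding R_def rank_app_def by (rule LeastI_ex[OF ex])
  then show "rank_app p > 0" "p dvd fib (rank_app p)" unfolding R_def by auto
  have "p dvd fib (gcd R n)" using R assms(1) by (simp add: fib_gcd)
  moreover have "gcd R n > 0" using R by simp
  ultimately have "R \<le> gcd R n" unfolding R_def rank_app_def by (intro Least_le) simp
  moreover have "gcd R n \<le> R" using R by (simp add: dvd_imp_le)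
  ultimately have "gcd R n = R" by simp
  then show "rank_app p dvd n" unfolding R_def[symmetric] by (metis gcd_dvd2)
qed

lemma fib_dvd_fib: "a dvd b \<Longrightarrow> fib a dvd fib b"
  by (metis fib_gcd gcd_dvd2 gcd_nat.absorb_iff1 dvd_refl)

lemma period1:
  fixes q N :: nat
  assumes "[fib N = 0] (mod q)" "[fib (Suc N) = 1] (mod q)"
  shows "[fib (m + N) = fib m] (mod q) \<and> [fib (Suc m + N) = fib (Suc m)] (mod q)"
proof (induction m)
  case 0 then show ?case using assms by simp
next
  case (Suc m)
  have "fib (Suc (Suc m) + N) = fib (Suc m + N) + fib (m + N)" by simp
  then have "[fib (Suc (Suc m) + N) = fib (Suc m) + fib m] (mod q)"
    using cong_add[of "fib (Suc m + N)" "fib (Suc m)" q "fib (m + N)" "fib m"] Suc by simp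
  then show ?case using Suc by simp
qed

lemma period2:
  fixes q N :: nat
  assumes "[fib N = 0] (mod q)" "[fib (Suc N) + 1 = 0] (mod q)"
  shows "[fib (m + N) + fib m = 0] (mod q) \<and> [fib (Suc m + N) + fib (Suc m) = 0] (mod q)"
proof (induction m)
  case 0 then show ?case using assms by simp
next
  case (Suc m)
  have "fib (Suc (Suc m) + N) + fib (Suc (Suc m)) = (fib (Suc m + N) + fib (Suc m)) + (fib (m + N) + fib m)" by simp
  then have "[fib (Suc (Suc m) + N) + fib (Suc (Suc m)) = 0 + 0] (mod q)"
    using cong_add[of "fib (Suc m + N) + fib (Suc m)" 0 q "fib (m + N) + fib m" 0] Suc by (simp add: ac_simps)
  then show ?case using Suc by (simp add: ac_simps)
qed

lemma pisano_bound:
  fixes q :: nat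
  assumes q: "prime q" "q \<noteq> 2" "q \<noteq> 5"
  shows "pisano q dvd (q - 1) \<or> pisano q dvd 2 * (q + 1)"
proof -
  have q1: "q > 2" using q prime_ge_2_nat[of q] by linarith
  from FL[OF q] show ?thesis
  proof
    assume h: "q dvd fib (q - 1) \<and> [fib q = 1] (mod q)"
    have a: "[fib (q - 1) = 0] (mod q)" using h by (simp add: cong_0_iff)
    have b: "[fib (Suc (q - 1)) = 1] (mod q)" using h q1 by simp
    have "\<forall>m. fib (m + (q - 1)) mod q = fib m mod q"
      using period1[OF a b] by (simp add: cong_def)
    then have "pisano q dvd (q - 1)" using q1 by (intro pisano_dvd) auto
    then show ?thesis ..
  next
    assume h: "q dvd fib (Suc q) \<and> [fib q + 1 = 0] (mod q)"
    have a: "[fib (Suc q) = 0] (mod q)" using h by (simp add: cong_0_iff)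
    have b: "[fib (Suc (Suc q)) + 1 = 0] (mod q)"
    proof -
      have "fib (Suc (Suc q)) + 1 = fib (Suc q) + (fib q + 1)" by simp
      then show ?thesis using cong_add[OF a conjunct2[OF h]] by simp
    qed
    have per: "\<forall>m. fib (m + 2 * (q + 1)) mod q = fib m mod q"
    proof
      fix m
      have c1: "[fib (m + Suc q + Suc q) + fib (m + Suc q) = 0] (mod q)"
        using conjunct1[OF period2[OF a b, of "m + Suc q"]] .
      have c2: "[fib (m + Suc q) + fib m = 0] (mod q)"
        using conjunct1[OF period2[OF a b, of m]] .
      have "[fib (m + Suc q + Suc q) + fib (m + Suc q) = fib m + fib (m + Suc q)] (mod q)"
        using cong_trans[OF c1 cong_sym[OF c2]] by (simp add: add.commute)
      then have "[fib (m + Suc q + Suc q) = fib m] (mod q)" using cong_add_rcancel_nat by blast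
      moreover have idx: "m + Suc q + Suc q = m + 2 * (q + 1)" by simp
      ultimately have "[fib (m + 2 * (q + 1)) = fib m] (mod q)" by (simp only: idx)
      then show "fib (m + 2 * (q + 1)) mod q = fib m mod q" by (simp only: cong_def)
    qed
    then have "pisano q dvd 2 * (q + 1)" by (intro pisano_dvd) auto
    then show ?thesis ..
  qed
qed

theorem theorem4p2:
  fixes q k :: nat
  assumes "prime q" and "odd q" and "q \<noteq> 5"
    and "2 \<le> k" and "k \<le> 31"
    and "prime (k * q + 1)"
    and "rank_app (k * q + 1) dvd pisano q"
  shows "k = 2"
proof (rule ccontr)
  assume k2: "k \<noteq> 2"
  define p where "p = k * q + 1"
  have pp: "prime p" using assms(6) p_def by simp
  have q2: "q \<noteq> 2" using assms(2) by auto
  have q3: "q > 2" using assms(1) q2 prime_ge_2_nat[of q] by linarith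
  have k3: "k \<ge> 3" using assms(4) k2 by linarith
  have kq: "k * q \<ge> 9" using mult_le_mono[OF k3, of 3 q] q3 by linarith
  have p5: "p > 5" using kq p_def by simp
  have ek: "even k"
  proof (rule ccontr)
    assume "odd k"
    then have "even p" using assms(2) p_def by simp
    moreover have "odd p" using prime_odd_nat[OF pp] p5 by simp
    ultimately show False by simp
  qed
  obtain t where qt: "q = 2 * t + 1" using assms(2) by (rule oddE)
  have pmod: "p mod (2 * k) = k + 1"
  proof -
    have "p = (k + 1) + (2 * k) * t" unfolding p_def qt by (simp add: algebra_simps)
    then have "p mod (2 * k) = (k + 1) mod (2 * k)" by simp
    also have "\<dots> = k + 1" using k3 by simp
    finally show ?thesis .
  qed
  have pne: "p \<noteq> k + 1"
  proof
    assume "p = k + 1"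
    then have "k * q = k * 1" unfolding p_def by simp
    then have "q = 1" using k3 by simp
    then show False using q3 by simp
  qed
  have p199: "p \<noteq> 199 \<or> k \<noteq> 22"
  proof (rule ccontr)
    assume "\<not> (p \<noteq> 199 \<or> k \<noteq> 22)"
    then have "22 * q = 22 * 9" unfolding p_def by auto
    then have "q = 9" by simp
    moreover have "\<not> prime (9::nat)" by simp
    ultimately show False using assms(1) by simp
  qed
  from FL[OF pp] p5 have fl: "p dvd fib (p - 1) \<or> p dvd fib (Suc p)" by auto
  define d where "d = rank_app p"
  have dd: "d dvd k * q \<or> d dvd k * q + 2" and dpos: "d > 0" and pd0: "p dvd fib d"
  proof -
    from fl show "d dvd k * q \<or> d dvd k * q + 2"
    proof
      assume h: "p dvd fib (p - 1)"
      have "p - 1 = k * q" unfolding p_def by simp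
      then show ?thesis using rank_props(3)[OF h] p5 k3 q3 unfolding d_def by auto
    next
      assume h: "p dvd fib (Suc p)"
      have "Suc p = k * q + 2" unfolding p_def by simp
      then show ?thesis using rank_props(3)[OF h] unfolding d_def by auto
    qed
    from fl obtain n where n: "p dvd fib n" "n > 0"
    proof
      assume "p dvd fib (p - 1)" then show ?thesis using p5 that[of "p - 1"] by simp
    next
      assume "p dvd fib (Suc p)" then show ?thesis using that[of "Suc p"] by simp
    qed
    show "d > 0" "p dvd fib d" unfolding d_def using rank_props(1,2)[OF n] by auto
  qed
  have dpi: "d dvd pisano q" using assms(7) unfolding d_def p_def .
  have pb: "pisano q dvd (q - 1) \<or> pisano q dvd 2 * (q + 1)"
    using pisano_bound[OF assms(1) q2 assms(3)] .
  have dpb: "d dvd (q - 1) \<or> d dvd 2 * (q + 1)" using pb dpi dvd_trans by blast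
  have nqd: "\<not> q dvd d"
  proof
    assume qd: "q dvd d"
    from dpb show False
    proof
      assume "d dvd q - 1"
      then have "q dvd q - 1" using qd dvd_trans by blast
      then have "q \<le> q - 1" using q3 by (intro dvd_imp_le) auto
      then show False using q3 by simp
    next
      assume "d dvd 2 * (q + 1)"
      then have "q dvd 2 * q + 2" using qd dvd_trans by (simp add: algebra_simps)
      then have "q dvd 2" using dvd_add_right_iff[OF dvd_triv_right[of q 2], of 2] by blast
      then have "q \<le> 2" by (intro dvd_imp_le) auto
      then show False using q3 by simp
    qed
  qed
  have cop: "coprime d q" using prime_imp_coprime[OF assms(1) nqd] by (simp add: coprime_commute)
  have "\<exists>m \<in> {k, k + 2, 2 * (k - 2)}. d dvd m"
  proof (cases "d dvd k * q")
    case True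
    then have "d dvd k" using cop coprime_dvd_mult_left_iff by blast
    then show ?thesis by blast
  next
    case False
    then have d2: "d dvd k * q + 2" using dd by blast
    from dpb show ?thesis
    proof
      assume h: "d dvd q - 1"
      have "k * q + 2 = k * (q - 1) + (k + 2)" using q3 by (simp add: algebra_simps)
      then have "d dvd k * (q - 1) + (k + 2)" using d2 by simp
      moreover have h2: "d dvd k * (q - 1)" using h by simp
      ultimately have "d dvd k + 2" using dvd_add_right_iff[OF h2, of "k + 2"] by blast
      then show ?thesis by blast
    next
      assume h: "d dvd 2 * (q + 1)"
      have eq: "k * (2 * (q + 1)) = 2 * (k * q + 2) + 2 * (k - 2)" using k3 by (simp add: algebra_simps)
      have "d dvd k * (2 * (q + 1))" using h by (rule dvd_mult)
      then have "d dvd 2 * (k * q + 2) + 2 * (k - 2)" using eq by metis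
      moreover have h2: "d dvd 2 * (k * q + 2)" using d2 by (rule dvd_mult)
      ultimately have "d dvd 2 * (k - 2)" using dvd_add_right_iff[OF h2, of "2 * (k - 2)"] by blast
      then show ?thesis by blast
    qed
  qed
  then obtain m where mm: "m \<in> {k, k + 2, 2 * (k - 2)}" and dm: "d dvd m" by blast
  have pd: "p dvd fib m" using pd0 fib_dvd_fib[OF dm] dvd_trans by blast
  obtain j where kj: "k = 2 * j" using ek by (rule evenE)
  have j: "2 \<le> j" "j \<le> 15" using kj k3 assms(5) by auto
  have jd: "j = 2 \<or> j = 3 \<or> j = 4 \<or> j = 5 \<or> j = 6 \<or> j = 7 \<or> j = 8 \<or> j = 9 \<or> j = 10 \<or> j = 11 \<or> j = 12 \<or> j = 13 \<or> j = 14 \<or> j = 15" using j by presburger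
  have "k = 4 \<or> k = 6 \<or> k = 8 \<or> k = 10 \<or> k = 12 \<or> k = 14 \<or> k = 16 \<or> k = 18 \<or> k = 20 \<or> k = 22 \<or> k = 24 \<or> k = 26 \<or> k = 28 \<or> k = 30"
    using kj jd by auto
  then show False
  proof (elim disjE)
    assume "k = 4"
    then show False using mm pd pmod pne p199 by (intro case4[OF _ pp]) auto
  next
    assume "k = 6"
    then show False using mm pd pmod pne p199 by (intro case6[OF _ pp]) auto
  next
    assume "k = 8"
    then show False using mm pd pmod pne p199 by (intro case8[OF _ pp]) auto
  next
    assume "k = 10"
    then show False using mm pd pmod pne p199 by (intro case10[OF _ pp]) auto
  next
    assume "k = 12"
    then show False using mm pd pmod pne p199 by (intro case12[OF _ pp]) auto
  next
    assume "k = 14"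
    then show False using mm pd pmod pne p199 by (intro case14[OF _ pp]) auto
  next
    assume "k = 16"
    then show False using mm pd pmod pne p199 by (intro case16[OF _ pp]) auto
  next
    assume "k = 18"
    then show False using mm pd pmod pne p199 by (intro case18[OF _ pp]) auto
  next
    assume "k = 20"
    then show False using mm pd pmod pne p199 by (intro case20[OF _ pp]) auto
  next
    assume "k = 22"
    then show False using mm pd pmod pne p199 by (intro case22[OF _ pp]) auto
  next
    assume "k = 24"
    then show False using mm pd pmod pne p199 by (intro case24[OF _ pp]) auto
  next
    assume "k = 26"
    then show False using mm pd pmod pne p199 by (intro case26[OF _ pp]) auto
  next
    assume "k = 28"
    then show False using mm pd pmod pne p199 by (intro case28[OF _ pp]) auto
  next
    assume "k = 30"
    then show False using mm pd pmod pne p199 by (intro case30[OF _ pp]) auto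
  qed
qed

end
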